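(* Let $\gamma,\lambda\in(0,1)$, $H>1$ and $T\in(0,\infty)$. Let $g:[0,\infty)\to\mathbb R$ be a nonnegative continuous function with $|g(t)-g(s)|\le H|t-s|^\gamma$ for all $t,s\ge0$ and $g(0)=0$. Then $$\Big(\int_0^T g(t)\,dt\Big)^{\frac{\gamma\lambda+1}{\gamma+1}}\le N\,H^{1/\gamma}\int_0^T g(t)^\lambda\,dt,$$ where $N=N(\gamma,\lambda)$. *)

theory Defs
  imports "HOL-Analysis.Analysis"
begin

end

theory Submission
  imports Defs
begin

lemma ident:
  fixes g l x y z :: real
  assumes "0 < g"
  shows "(1-(g*l+1)/(g+1))*(1/g+l) * z + (1/g) * y + (1-(g*l+1)/(g+1)) * ((1/g) * (x - z - y) + l * (x - z))
       = (1-l)*((g*l+1)/(g+1)) * x + (((g*l+1)/(g+1))/g) * y"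
proof -
  define a where "a = (g*l+1)/(g+1)"
  define u where "u = 1/g"
  have au: "a*(g+1) = g*l+1" using assms unfolding a_def by (simp add: add_pos_pos)
  have gu: "g*u = 1" using assms unfolding u_def by simp
  have c: "(1-a)*(u+l) = (1-l)*a"
  proof -
    have "(1-a)*(u+l) - (1-l)*a = u*(1 + g*l - a*(1+g))"
      using gu by (simp add: algebra_simps)
    also have "\<dots> = 0" using au by (simp add: algebra_simps)
    finally show ?thesis by simp
  qed
  have "(1-a)*(u+l) * z + u * y + (1-a) * (u * (x - z - y) + l * (x - z))
       = ((1-a)*(u+l)) * x + (a*u) * y" by (simp add: algebra_simps)
  then show ?thesis using c unfolding a_def[symmetric] u_def[symmetric]
    by (simp add: u_def)
qed

lemma alg:
  fixes gam lam M H :: real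
  assumes g: "0 < gam" "gam < 1" and l: "0 < lam" "lam < 1" and M: "M > 0" and H: "H > 1"
  defines "a \<equiv> (gam * lam + 1) / (gam + 1)"
  shows "M powr ((1-lam)*a) \<le> 2 powr ((1-a)*(1/gam+lam)) * H powr (1/gam) *
     ((M/(2*H)) powr (1/gam) * (M/2) powr lam) powr (1-a)"
proof -
  have gl: "0 < gam*lam+1" using g l by (simp add: add_pos_pos)
  have a1: "a < 1" "0 < a" using g l gl unfolding a_def by (auto simp: field_simps)
  have pos: "0 < 2 powr ((1-a)*(1/gam+lam)) * H powr (1/gam) *
     ((M/(2*H)) powr (1/gam) * (M/2) powr lam) powr (1-a)" using M H by simp
  have eq: "ln (2 powr ((1-a)*(1/gam+lam)) * H powr (1/gam) *
     ((M/(2*H)) powr (1/gam) * (M/2) powr lam) powr (1-a))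
     = (1-a)*(1/gam+lam) * ln 2 + (1/gam) * ln H + (1-a) * ((1/gam) * (ln M - ln 2 - ln H) + lam * (ln M - ln 2))"
    using M H by (simp add: ln_mult ln_div ln_powr)
  have "(1-a)*(1/gam+lam) * ln 2 + (1/gam) * ln H + (1-a) * ((1/gam) * (ln M - ln 2 - ln H) + lam * (ln M - ln 2))
       = (1-lam)*a * ln M + (a/gam) * ln H"
    using ident[OF g(1), where l=lam and x="ln M" and y="ln H" and z="ln 2"] unfolding a_def by (simp only:)
  moreover have "0 \<le> (a/gam) * ln H" using a1 g H by simp
  ultimately have "ln (M powr ((1-lam)*a)) \<le> ln (2 powr ((1-a)*(1/gam+lam)) * H powr (1/gam) *
     ((M/(2*H)) powr (1/gam) * (M/2) powr lam) powr (1-a))"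
    using eq M by (simp add: ln_powr)
  moreover have p1: "0 < M powr ((1-lam)*a)" using M by simp
  ultimately show ?thesis using ln_le_cancel_iff[OF p1 pos] by blast
qed

theorem lemma4p2:
  fixes gam lam :: real
  assumes "0 < gam" "gam < 1" "0 < lam" "lam < 1"
  shows "\<exists>N::real. \<forall>(H::real) (T::real) (g::real \<Rightarrow> real).
           H > 1 \<longrightarrow> T > 0 \<longrightarrow>
           continuous_on {0..} g \<longrightarrow>
           (\<forall>t\<ge>0. g t \<ge> 0) \<longrightarrow>
           (\<forall>t\<ge>0. \<forall>s\<ge>0. \<bar>g t - g s\<bar> \<le> H * \<bar>t - s\<bar> powr gam) \<longrightarrow>
           g 0 = 0 \<longrightarrow>
           (integral {0..T} g) powr ((gam * lam + 1) / (gam + 1))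
             \<le> N * H powr (1 / gam) * integral {0..T} (%t. g t powr lam)"
proof -
  define a where "a = (gam * lam + 1) / (gam + 1)"
  define N where "N = 2 powr ((1-a)*(1/gam+lam))"
  have gl: "0 < gam*lam+1" using assms by (simp add: add_pos_pos)
  have a1: "a < 1" "0 < a" using assms gl unfolding a_def by (auto simp: field_simps)
  have N0: "N > 0" unfolding N_def by simp
  show ?thesis
  proof (rule exI[of _ N], intro allI impI)
    fix H T :: real and g :: "real \<Rightarrow> real"
    assume H: "H > 1" and T: "T > 0" and gc: "continuous_on {0..} g"
      and gnn: "\<forall>t\<ge>0. g t \<ge> 0"
      and hol: "\<forall>t\<ge>0. \<forall>s\<ge>0. \<bar>g t - g s\<bar> \<le> H * \<bar>t - s\<bar> powr gam"
      and g0: "g 0 = 0"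
    define I where "I = integral {0..T} g"
    define J where "J = integral {0..T} (%t. g t powr lam)"
    have c1: "continuous_on {0..T} g" using gc by (rule continuous_on_subset) auto
    have c2: "continuous_on {0..T} (%t. g t powr lam)"
      by (rule continuous_on_powr'[OF c1 continuous_on_const]) (use gnn assms in auto)
    have ig: "g integrable_on {0..T}" by (rule integrable_continuous_interval[OF c1])
    have ij: "(%t. g t powr lam) integrable_on {0..T}" by (rule integrable_continuous_interval[OF c2])
    obtain t0 where t0: "t0 \<in> {0..T}" and t0max: "\<forall>y\<in>{0..T}. g y \<le> g t0"
      using continuous_attains_sup[OF compact_Icc _ c1] T by auto
    define M where "M = g t0"
    have M0: "M \<ge> 0" using gnn t0 unfolding M_def by auto
    have I0: "I \<ge> 0" unfolding I_def by (rule integral_nonneg[OF ig]) (use gnn in auto)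
    have J0: "J \<ge> 0" unfolding J_def by (rule integral_nonneg[OF ij]) auto
    have pw: "g t \<le> M powr (1-lam) * g t powr lam" if "t \<in> {0..T}" for t
    proof (cases "g t = 0")
      case True then show ?thesis by simp
    next
      case False
      then have gp: "g t > 0" using gnn that by (auto simp: less_le)
      have "g t = g t powr (1-lam) * g t powr lam"
        using gp by (simp add: powr_add[symmetric])
      also have "\<dots> \<le> M powr (1-lam) * g t powr lam"
        using t0max that gp assms unfolding M_def
        by (intro mult_right_mono powr_mono2) auto
      finally show ?thesis .
    qed
    have IJ: "I \<le> M powr (1-lam) * J"
    proof -
      have "I \<le> integral {0..T} (%t. M powr (1-lam) * g t powr lam)"
        unfolding I_def by (rule integral_le[OF ig]) (use integrable_on_cmult_left[OF ij] pw in auto)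
      also have "\<dots> = M powr (1-lam) * J" unfolding J_def using integral_mult[OF ij] by simp
      finally show ?thesis .
    qed
    show "(integral {0..T} g) powr ((gam * lam + 1) / (gam + 1))
             \<le> N * H powr (1 / gam) * integral {0..T} (%t. g t powr lam)"
    proof (cases "I = 0")
      case True
      then show ?thesis using N0 J0 H unfolding I_def[symmetric] J_def[symmetric] by simp
    next
      case False
      then have Ip: "I > 0" using I0 by simp
      have Mp: "M > 0"
      proof (rule ccontr)
        assume "\<not> M > 0" then have "M = 0" using M0 by simp
        then show False using IJ Ip by simp
      qed
      define d where "d = (M/(2*H)) powr (1/gam)"
      have d0: "d > 0" unfolding d_def using Mp H by simp
      have dg: "d powr gam = M/(2*H)" unfolding d_def using assms Mp H by (simp add: powr_powr)
      have dt0: "d \<le> t0"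
      proof (rule ccontr)
        assume "\<not> d \<le> t0"
        then have "t0 powr gam < d powr gam" using t0 assms by (intro powr_less_mono2) auto
        then have "H * t0 powr gam < H * (M/(2*H))" using H dg by (intro mult_strict_left_mono) auto
        also have "\<dots> < M" using H Mp by (simp add: field_simps)
        finally have "H * t0 powr gam < M" .
        moreover have "\<bar>g t0 - g 0\<bar> \<le> H * \<bar>t0 - 0\<bar> powr gam" using hol t0 by (metis atLeastAtMost_iff order_refl)
        ultimately show False using g0 t0 M0 unfolding M_def by auto
      qed
      have lowb: "(M/2) powr lam \<le> g t powr lam" if "t \<in> {t0-d..t0}" for t
      proof -
        have tge: "t \<ge> 0" using that dt0 by auto
        have "\<bar>g t0 - g t\<bar> \<le> H * \<bar>t0 - t\<bar> powr gam" using hol t0 tge by auto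
        also have "\<dots> \<le> H * d powr gam"
          using that assms H by (intro mult_left_mono powr_mono2) auto
        also have "\<dots> = M/2" using dg H by simp
        finally have "M/2 \<le> g t" unfolding M_def by linarith
        then show ?thesis using Mp assms by (intro powr_mono2) auto
      qed
      define K where "K = (M/(2*H)) powr (1/gam) * (M/2) powr lam"
      have K0: "K > 0" unfolding K_def using Mp H by simp
      have KJ: "K \<le> J"
      proof -
        have sub: "{t0-d..t0} \<subseteq> {0..T}" using dt0 t0 by auto
        have ij2: "(%t. g t powr lam) integrable_on {t0-d..t0}"
          by (rule integrable_on_subinterval[OF ij sub])
        have "K = integral {t0-d..t0} (%t. (M/2) powr lam)"
          using d0 unfolding K_def d_def by simp
        also have "\<dots> \<le> integral {t0-d..t0} (%t. g t powr lam)"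
          by (rule integral_le) (use ij2 lowb in auto)
        also have "\<dots> \<le> J" unfolding J_def
          by (rule integral_subset_le[OF sub ij2 ij]) auto
        finally show ?thesis .
      qed
      have Jp: "J > 0" using K0 KJ by simp
      have "I powr a \<le> (M powr (1-lam) * J) powr a"
        using IJ I0 a1 by (intro powr_mono2) auto
      also have "\<dots> = M powr ((1-lam)*a) * J powr a"
        using Mp J0 by (simp add: powr_mult powr_powr)
      also have "\<dots> \<le> (N * H powr (1/gam) * K powr (1-a)) * J powr a"
        using alg[OF assms Mp H] unfolding N_def K_def a_def
        by (intro mult_right_mono) auto
      also have "\<dots> \<le> (N * H powr (1/gam) * J powr (1-a)) * J powr a"
        using KJ K0 a1 N0 by (intro mult_right_mono mult_left_mono powr_mono2) auto
      also have "\<dots> = N * H powr (1/gam) * J"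
        using Jp by (simp add: mult.assoc powr_add[symmetric])
      finally show ?thesis unfolding I_def J_def a_def .
    qed
  qed
qed

end
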